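(* Let $A$ be a cartesian cubical set. The canonical map $p:A^{\mathrm{I}}\to A\times A$ has the path-lifting property if and only if $A$ has $2$-box filling.
   Context: Cartesian cubical sets are presheaves on $\mathbb{B}^{op}$, where $\mathbb{B}$ is the category of finite sets $[n]=\{\bot,x_1,\dots,x_n,\top\}$ ($n\ge0$, $\bot\ne\top$) and functions preserving $\bot,\top$. $\mathrm{I}^n$ is the representable on $[n]$, $\mathrm{I}^n\cong\mathrm{I}\times\dots\times\mathrm{I}$ with $\mathrm{I}=\mathrm{I}^1$, $\mathrm{I}^0=1$; the two maps $[1]\to[0]$ in $\mathbb{B}$ give endpoints $0,1:1\to\mathrm{I}$, and $\partial\mathrm{I}=1+1\to\mathrm{I}$ is their copairing. $p:A^{\mathrm{I}}\to A^{\partial\mathrm{I}}\cong A\times A$ is induced by $\partial\mathrm{I}\to\mathrm{I}$. A map $q:E\to D$ has the path-lifting property if for each endpoint $\delta\in\{0,1\}$, $\delta:1\to\mathrm{I}$, every commutative square with $\delta$ on the left and $q$ on the right (i.e. maps $u:1\to E$, $v:\mathrm{I}\to D$ with $qu=v\delta$) has a diagonal filler $w:\mathrm{I}\to E$ with $w\delta=u$, $qw=v$. For $1\le i\le n$ and $d\in\{0,1\}$, the face $\alpha_i^d:\mathrm{I}^{n-1}\to\mathrm{I}^n$ inserts the endpoint $d$ in the $i$-th coordinate. For $e\in\{0,1\}$, the open box $\sqcup^n_e\rightarrowtail\mathrm{I}^n$ is the union in the subobject lattice of $\mathrm{I}^n$ of the images of all faces $\alpha_i^d$ with $(i,d)\ne(1,e)$.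 A cubical set $A$ has $n$-box filling if for each $e\in\{0,1\}$ every map $\sqcup^n_e\to A$ extends along the inclusion $\sqcup^n_e\rightarrowtail\mathrm{I}^n$. *)

theory Defs
  imports Main
begin

section \<open>The category B of bipointed finite sets [n] = {Bot, x_1..x_n, Top}\<close>

datatype bpt = Bot | Top | Var nat

definition obj :: "nat \<Rightarrow> bpt set" where
  "obj n = {Bot, Top} \<union> Var ` {1..n}"

text \<open>A morphism [n] -> [m] of B, represented extensionally: it preserves Bot and Top,
  maps [n] into [m], and is normalised to Bot outside [n].\<close>
definition Bmor :: "nat \<Rightarrow> nat \<Rightarrow> (bpt \<Rightarrow> bpt) \<Rightarrow> bool" where
  "Bmor n m f \<longleftrightarrow> f Bot = Bot \<and> f Top = Top \<and> (\<forall>i\<in>{1..n}. f (Var i) \<in> obj m)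
     \<and> (\<forall>i. i \<notin> {1..n} \<longrightarrow> f (Var i) = Bot)"

definition idB :: "nat \<Rightarrow> bpt \<Rightarrow> bpt" where
  "idB n = (\<lambda>z. if z \<in> obj n then z else Bot)"

section \<open>Cartesian cubical sets: functors B -> Set (presheaves on B^op)\<close>

record 'a cset =
  cells :: "nat \<Rightarrow> 'a set"
  act :: "nat \<Rightarrow> nat \<Rightarrow> (bpt \<Rightarrow> bpt) \<Rightarrow> 'a \<Rightarrow> 'a"

definition cubical_set :: "'a cset \<Rightarrow> bool" where
  "cubical_set X \<longleftrightarrow>
     (\<forall>n m f x. Bmor n m f \<and> x \<in> cells X n \<longrightarrow> act X n m f x \<in> cells X m) \<and>
     (\<forall>n x. x \<in> cells X n \<longrightarrow> act X n n (idB n) x = x) \<and>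
     (\<forall>n m k f g x. Bmor n m f \<and> Bmor m k g \<and> x \<in> cells X n \<longrightarrow>
        act X n k (g \<circ> f) x = act X m k g (act X n m f x))"

definition cmap :: "'a cset \<Rightarrow> 'b cset \<Rightarrow> (nat \<Rightarrow> 'a \<Rightarrow> 'b) \<Rightarrow> bool" where
  "cmap X Y \<phi> \<longleftrightarrow>
     (\<forall>n x. x \<in> cells X n \<longrightarrow> \<phi> n x \<in> cells Y n) \<and>
     (\<forall>n m f x. Bmor n m f \<and> x \<in> cells X n \<longrightarrow> \<phi> m (act X n m f x) = act Y n m f (\<phi> n x)) \<and>
     (\<forall>n x. x \<notin> cells X n \<longrightarrow> \<phi> n x = undefined)"

definition meq :: "'a cset \<Rightarrow> (nat \<Rightarrow> 'a \<Rightarrow> 'b) \<Rightarrow> (nat \<Rightarrow> 'a \<Rightarrow> 'b) \<Rightarrow> bool" where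
  "meq X \<phi> \<psi> \<longleftrightarrow> (\<forall>n. \<forall>x\<in>cells X n. \<phi> n x = \<psi> n x)"

definition cmp :: "(nat \<Rightarrow> 'b \<Rightarrow> 'c) \<Rightarrow> (nat \<Rightarrow> 'a \<Rightarrow> 'b) \<Rightarrow> nat \<Rightarrow> 'a \<Rightarrow> 'c" where
  "cmp \<psi> \<phi> = (\<lambda>n x. \<psi> n (\<phi> n x))"

text \<open>Representable I^k = Hom_B([k], -); I = I^1, terminal object 1 = I^0.\<close>
definition repr :: "nat \<Rightarrow> (bpt \<Rightarrow> bpt) cset" where
  "repr k = \<lparr> cells = (\<lambda>m. {f. Bmor k m f}), act = (\<lambda>n m g f. g \<circ> f) \<rparr>"

abbreviation II :: "(bpt \<Rightarrow> bpt) cset" where "II \<equiv> repr 1"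

definition prod_cs :: "'a cset \<Rightarrow> 'b cset \<Rightarrow> ('a \<times> 'b) cset" where
  "prod_cs X Y = \<lparr> cells = (\<lambda>n. cells X n \<times> cells Y n),
     act = (\<lambda>n m f (x, y). (act X n m f x, act Y n m f y)) \<rparr>"

text \<open>Exponential A^X of presheaves: (A^X)([c]) = Hom(y[c] \<times> X, A).\<close>
definition expo :: "'x cset \<Rightarrow> 'a cset \<Rightarrow> (nat \<Rightarrow> (bpt \<Rightarrow> bpt) \<times> 'x \<Rightarrow> 'a) cset" where
  "expo X A = \<lparr> cells = (\<lambda>c. {\<phi>. cmap (prod_cs (repr c) X) A \<phi>}),
     act = (\<lambda>n m f \<phi>. (\<lambda>k (g, x). if (g, x) \<in> cells (prod_cs (repr m) X) k
                                    then \<phi> k (g \<circ> f, x) else undefined)) \<rparr>"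

definition ep :: "bool \<Rightarrow> bpt \<Rightarrow> bpt" where
  "ep d = (\<lambda>z. case z of Bot \<Rightarrow> Bot | Top \<Rightarrow> Top
              | Var i \<Rightarrow> if i = 1 then (if d then Top else Bot) else Bot)"

text \<open>Endpoint maps 1 = I^0 -> I (Yoneda image of ep d).\<close>
definition endpt :: "bool \<Rightarrow> nat \<Rightarrow> (bpt \<Rightarrow> bpt) \<Rightarrow> (bpt \<Rightarrow> bpt)" where
  "endpt d = (\<lambda>k g. if Bmor 0 k g then g \<circ> ep d else undefined)"

text \<open>The canonical map p : A^I -> A^{\<partial>I} \<cong> A \<times> A (restriction along the endpoints,
  followed by the Yoneda isomorphism A^1 \<cong> A, i.e. evaluation at (id_c, endpoint)).\<close>
definition pmap :: "'a cset \<Rightarrow> nat \<Rightarrow> (nat \<Rightarrow> (bpt \<Rightarrow> bpt) \<times> (bpt \<Rightarrow> bpt) \<Rightarrow> 'a) \<Rightarrow> 'a \<times> 'a" where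
  "pmap A = (\<lambda>c \<phi>. if \<phi> \<in> cells (expo II A) c
                     then (\<phi> c (idB c, ep False), \<phi> c (idB c, ep True)) else undefined)"

definition path_lifting :: "'e cset \<Rightarrow> 'd cset \<Rightarrow> (nat \<Rightarrow> 'e \<Rightarrow> 'd) \<Rightarrow> bool" where
  "path_lifting E D q \<longleftrightarrow>
     (\<forall>d u v. cmap (repr 0) E u \<and> cmap II D v \<and> meq (repr 0) (cmp q u) (cmp v (endpt d)) \<longrightarrow>
        (\<exists>w. cmap II E w \<and> meq (repr 0) (cmp w (endpt d)) u \<and> meq II (cmp q w) v))"

text \<open>The B-map [n] -> [n-1] inducing the face alpha_i^d : I^{n-1} -> I^n.\<close>
definition face_s :: "nat \<Rightarrow> nat \<Rightarrow> bool \<Rightarrow> bpt \<Rightarrow> bpt" where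
  "face_s n i d = (\<lambda>z. case z of Bot \<Rightarrow> Bot | Top \<Rightarrow> Top
     | Var j \<Rightarrow> if 1 \<le> j \<and> j < i then Var j
               else if j = i then (if d then Top else Bot)
               else if i < j \<and> j \<le> n then Var (j - 1) else Bot)"

definition face_img :: "nat \<Rightarrow> nat \<Rightarrow> bool \<Rightarrow> nat \<Rightarrow> (bpt \<Rightarrow> bpt) set" where
  "face_img n i d m = {g \<circ> face_s n i d | g. Bmor (n - 1) m g}"

definition obox :: "nat \<Rightarrow> bool \<Rightarrow> (bpt \<Rightarrow> bpt) cset" where
  "obox n e = \<lparr> cells = (\<lambda>m. \<Union>{face_img n i d m | i d. 1 \<le> i \<and> i \<le> n \<and> (i, d) \<noteq> (1, e)}),
     act = (\<lambda>k m g f. g \<circ> f) \<rparr>"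

definition box_filling :: "nat \<Rightarrow> 'a cset \<Rightarrow> bool" where
  "box_filling n A \<longleftrightarrow>
     (\<forall>e \<phi>. cmap (obox n e) A \<phi> \<longrightarrow> (\<exists>\<psi>. cmap (repr n) A \<psi> \<and> meq (obox n e) \<psi> \<phi>))"

end

theory Submission
  imports Defs
begin


definition c0 :: "bpt \<Rightarrow> bpt" where "c0 = (\<lambda>z. if z = Top then Top else Bot)"
definition val :: "bool \<Rightarrow> bpt" where "val b = (if b then Top else Bot)"
definition pr1 :: "bpt \<Rightarrow> bpt" where
  "pr1 = (\<lambda>z. case z of Bot \<Rightarrow> Bot | Top \<Rightarrow> Top | Var i \<Rightarrow> if i = 1 then Var 1 else Bot)"
definition pr2 :: "bpt \<Rightarrow> bpt" where
  "pr2 = (\<lambda>z. case z of Bot \<Rightarrow> Bot | Top \<Rightarrow> Top | Var i \<Rightarrow> if i = 1 then Var 2 else Bot)"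
definition pair :: "(bpt \<Rightarrow> bpt) \<Rightarrow> (bpt \<Rightarrow> bpt) \<Rightarrow> bpt \<Rightarrow> bpt" where
  "pair h1 h2 = (\<lambda>z. case z of Bot \<Rightarrow> Bot | Top \<Rightarrow> Top
     | Var i \<Rightarrow> if i = 1 then h1 (Var 1) else if i = 2 then h2 (Var 1) else Bot)"

lemma obj_simps[simp]: "Bot \<in> obj m" "Top \<in> obj m" "Var i \<in> obj m \<longleftrightarrow> 1 \<le> i \<and> i \<le> m"
  by (auto simp: obj_def)

lemma BmorD: assumes "Bmor n m f"
  shows "f Bot = Bot" "f Top = Top" "\<And>i. 1 \<le> i \<Longrightarrow> i \<le> n \<Longrightarrow> f (Var i) \<in> obj m"
    "\<And>i. \<not> (1 \<le> i \<and> i \<le> n) \<Longrightarrow> f (Var i) = Bot"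
  using assms by (auto simp: Bmor_def)

lemma Bmor_comp: "Bmor n m f \<Longrightarrow> Bmor m k g \<Longrightarrow> Bmor n k (g \<circ> f)"
  unfolding Bmor_def obj_def by fastforce

lemma Bmor_eqI: assumes "Bmor n m f" "Bmor n m' g" "\<And>i. 1 \<le> i \<Longrightarrow> i \<le> n \<Longrightarrow> f (Var i) = g (Var i)"
  shows "f = g"
proof
  fix z show "f z = g z"
  proof (cases z)
    case (Var i) thus ?thesis using assms by (cases "1 \<le> i \<and> i \<le> n") (auto simp: Bmor_def)
  qed (use assms in \<open>auto simp: Bmor_def\<close>)
qed

lemma Bmor_0: "Bmor 0 k x \<longleftrightarrow> x = c0"
proof
  assume "Bmor 0 k x" thus "x = c0" unfolding c0_def
    by (intro ext, case_tac z) (auto simp: Bmor_def)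
qed (auto simp: Bmor_def c0_def)

lemma Bmor_ep[simp]: "Bmor 1 k (ep d)" "Bmor (Suc 0) k (ep d)"
  by (auto simp: Bmor_def ep_def)

lemma ep_Var1[simp]: "ep d (Var 1) = val d" "ep d (Var (Suc 0)) = val d" by (simp_all add: ep_def val_def)

lemma comp_ep: "f Bot = Bot \<Longrightarrow> f Top = Top \<Longrightarrow> f \<circ> ep d = ep d"
  by (rule ext, case_tac x) (auto simp: ep_def)

lemma comp_c0: "f Bot = Bot \<Longrightarrow> f Top = Top \<Longrightarrow> f \<circ> c0 = c0"
  by (rule ext) (auto simp: c0_def)

lemma Bmor_idB[simp]: "Bmor n n (idB n)"
  by (auto simp: Bmor_def idB_def obj_def)

lemma idB_left: "Bmor n m f \<Longrightarrow> idB m \<circ> f = f"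
  by (rule ext, case_tac x) (auto simp: Bmor_def idB_def)

lemma idB_right: assumes "Bmor n m f" shows "f \<circ> idB n = f"
proof
  fix z show "(f \<circ> idB n) z = f z"
  proof (cases z)
    case (Var i) thus ?thesis using assms by (cases "1 \<le> i \<and> i \<le> n") (auto simp: Bmor_def idB_def)
  qed (use assms in \<open>auto simp: Bmor_def idB_def\<close>)
qed

lemma Bmor1_val: "Bmor 1 k h \<Longrightarrow> h (Var 1) = val d \<Longrightarrow> h = ep d"
  by (rule Bmor_eqI[of 1 k _ 0]) (auto simp: Bmor_def ep_def val_def)

lemma Bmor_pr1[simp]: "Bmor 1 2 pr1" and Bmor_pr2[simp]: "Bmor 1 2 pr2"
  by (auto simp: Bmor_def pr1_def pr2_def)

lemma pair_Bmor: "Bmor 1 m h1 \<Longrightarrow> Bmor 1 m h2 \<Longrightarrow> Bmor 2 m (pair h1 h2)"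
  by (auto simp: Bmor_def pair_def)

lemma pair_Var[simp]: "pair h1 h2 (Var 1) = h1 (Var 1)" "pair h1 h2 (Var 2) = h2 (Var 1)"
  "pair h1 h2 (Var (Suc 0)) = h1 (Var (Suc 0))" "pair h1 h2 (Var (Suc (Suc 0))) = h2 (Var (Suc 0))"
  by (auto simp: pair_def)

lemma pr_Var[simp]: "pr1 (Var 1) = Var 1" "pr2 (Var 1) = Var 2"
  "pr1 (Var (Suc 0)) = Var (Suc 0)" "pr2 (Var (Suc 0)) = Var 2"
  by (auto simp: pr1_def pr2_def)

lemma pair_eta: assumes "Bmor 2 m g" shows "pair (g \<circ> pr1) (g \<circ> pr2) = g"
proof (rule Bmor_eqI[of 2 m _ m])
  show "Bmor 2 m (pair (g \<circ> pr1) (g \<circ> pr2))" using assms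
    by (intro pair_Bmor Bmor_comp[OF Bmor_pr1] Bmor_comp[OF Bmor_pr2])
  fix i :: nat assume "1 \<le> i" "i \<le> 2" then have "i = 1 \<or> i = 2" by auto
  thus "pair (g \<circ> pr1) (g \<circ> pr2) (Var i) = g (Var i)" by (auto simp: pair_def)
qed (fact assms)

lemma pair_pr1: assumes "Bmor 1 m h1" "Bmor 1 m h2" shows "pair h1 h2 \<circ> pr1 = h1"
proof (rule Bmor_eqI[of 1 m _ m])
  show "Bmor 1 m (pair h1 h2 \<circ> pr1)" by (rule Bmor_comp[OF Bmor_pr1 pair_Bmor[OF assms]])
qed (use assms in auto)

lemma pair_pr2: assumes "Bmor 1 m h1" "Bmor 1 m h2" shows "pair h1 h2 \<circ> pr2 = h2"
proof (rule Bmor_eqI[of 1 m _ m])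
  show "Bmor 1 m (pair h1 h2 \<circ> pr2)" by (rule Bmor_comp[OF Bmor_pr2 pair_Bmor[OF assms]])
qed (use assms in auto)

lemma comp_pair: "f Bot = Bot \<Longrightarrow> f Top = Top \<Longrightarrow> f \<circ> pair h1 h2 = pair (f \<circ> h1) (f \<circ> h2)"
  by (rule ext, case_tac x) (auto simp: pair_def)

lemma face_img_1: "face_img 2 1 b m = {g. Bmor 2 m g \<and> g (Var 1) = val b}"
proof safe
  fix g assume "g \<in> face_img 2 1 b m"
  then obtain g' where g: "g = g' \<circ> face_s 2 1 b" "Bmor 1 m g'" by (auto simp: face_img_def)
  have "Bmor 2 1 (face_s 2 1 b)" by (auto simp: Bmor_def face_s_def)
  thus "Bmor 2 m g" using g Bmor_comp by blast
  show "g (Var 1) = val b" using g by (auto simp: face_s_def val_def Bmor_def)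
next
  fix g assume g: "Bmor 2 m g" "g (Var 1) = val b"
  have "g = (g \<circ> pr2) \<circ> face_s 2 1 b"
  proof
    fix z show "g z = ((g \<circ> pr2) \<circ> face_s 2 1 b) z"
    proof (cases z)
      case (Var i)
      have "i = 0 \<or> i = 1 \<or> i = 2 \<or> i > 2" by arith
      thus ?thesis using g Var by (auto simp: face_s_def val_def pr2_def Bmor_def)
    qed (use g in \<open>auto simp: face_s_def val_def pr2_def Bmor_def\<close>)
  qed
  moreover have "Bmor 1 m (g \<circ> pr2)" using g Bmor_comp[OF Bmor_pr2] by blast
  ultimately show "g \<in> face_img 2 1 b m" by (auto simp: face_img_def)
qed

lemma face_img_2: "face_img 2 2 b m = {g. Bmor 2 m g \<and> g (Var 2) = val b}"
proof safe
  fix g assume "g \<in> face_img 2 2 b m"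
  then obtain g' where g: "g = g' \<circ> face_s 2 2 b" "Bmor 1 m g'" by (auto simp: face_img_def)
  have "Bmor 2 1 (face_s 2 2 b)" by (auto simp: Bmor_def face_s_def)
  thus "Bmor 2 m g" using g Bmor_comp by blast
  show "g (Var 2) = val b" using g by (auto simp: face_s_def val_def Bmor_def)
next
  fix g assume g: "Bmor 2 m g" "g (Var 2) = val b"
  have "g = (g \<circ> pr1) \<circ> face_s 2 2 b"
  proof
    fix z show "g z = ((g \<circ> pr1) \<circ> face_s 2 2 b) z"
    proof (cases z)
      case (Var i)
      have "i = 0 \<or> i = 1 \<or> i = 2 \<or> i > 2" by arith
      thus ?thesis using g Var by (auto simp: face_s_def val_def pr1_def Bmor_def)
    qed (use g in \<open>auto simp: face_s_def val_def pr1_def Bmor_def\<close>)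
  qed
  moreover have "Bmor 1 m (g \<circ> pr1)" using g Bmor_comp[OF Bmor_pr1] by blast
  ultimately show "g \<in> face_img 2 2 b m" by (auto simp: face_img_def)
qed

lemma obox_cells: "g \<in> cells (obox 2 e) m \<longleftrightarrow>
   Bmor 2 m g \<and> (g (Var 1) = val (\<not> e) \<or> g (Var 2) = val False \<or> g (Var 2) = val True)"
proof -
  have "g \<in> cells (obox 2 e) m \<longleftrightarrow> (\<exists>i d. 1 \<le> i \<and> i \<le> (2::nat) \<and> (i, d) \<noteq> (1, e) \<and> g \<in> face_img 2 i d m)"
    by (auto simp: obox_def)
  also have "\<dots> \<longleftrightarrow> g \<in> face_img 2 1 (\<not> e) m \<or> g \<in> face_img 2 2 False m \<or> g \<in> face_img 2 2 True m"
  proof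
    assume "\<exists>i d. 1 \<le> i \<and> i \<le> (2::nat) \<and> (i, d) \<noteq> (1, e) \<and> g \<in> face_img 2 i d m"
    then obtain i d where i: "1 \<le> i" "i \<le> (2::nat)" "(i, d) \<noteq> (1, e)" "g \<in> face_img 2 i d m" by blast
    have "i = 1 \<or> i = 2" using i by arith
    thus "g \<in> face_img 2 1 (\<not> e) m \<or> g \<in> face_img 2 2 False m \<or> g \<in> face_img 2 2 True m"
      using i by (cases d) auto
  next
    assume "g \<in> face_img 2 1 (\<not> e) m \<or> g \<in> face_img 2 2 False m \<or> g \<in> face_img 2 2 True m"
    thus "\<exists>i d. 1 \<le> i \<and> i \<le> (2::nat) \<and> (i, d) \<noteq> (1, e) \<and> g \<in> face_img 2 i d m"
    proof (elim disjE)
      assume "g \<in> face_img 2 1 (\<not> e) m" thus ?thesis by (intro exI[of _ 1] exI[of _ "\<not> e"]) auto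
    next
      assume "g \<in> face_img 2 2 False m" thus ?thesis by (intro exI[of _ 2] exI[of _ False]) auto
    next
      assume "g \<in> face_img 2 2 True m" thus ?thesis by (intro exI[of _ 2] exI[of _ True]) auto
    qed
  qed
  finally show ?thesis unfolding face_img_1 face_img_2 by blast
qed


lemma repr_cells[simp]: "f \<in> cells (repr k) m \<longleftrightarrow> Bmor k m f"
  and repr_act[simp]: "act (repr k) n m g f = g \<circ> f"
  by (auto simp: repr_def)

lemma prod_cells[simp]: "(a, b) \<in> cells (prod_cs X Y) n \<longleftrightarrow> a \<in> cells X n \<and> b \<in> cells Y n"
  and prod_act[simp]: "act (prod_cs X Y) n m f (a, b) = (act X n m f a, act Y n m f b)"
  by (auto simp: prod_cs_def)

lemma expo_cells[simp]: "\<phi> \<in> cells (expo X A) c \<longleftrightarrow> cmap (prod_cs (repr c) X) A \<phi>"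
  by (auto simp: expo_def)

lemma expo_act: "act (expo X A) n m f \<phi> = (\<lambda>k (g, x). if (g, x) \<in> cells (prod_cs (repr m) X) k
                                    then \<phi> k (g \<circ> f, x) else undefined)"
  by (auto simp: expo_def)

lemma obox_act[simp]: "act (obox n e) k m g f = g \<circ> f"
  by (auto simp: obox_def)

lemma cmapD: assumes "cmap X Y \<phi>"
  shows "\<And>x n. x \<in> cells X n \<Longrightarrow> \<phi> n x \<in> cells Y n"
    "\<And>n m f x. Bmor n m f \<Longrightarrow> x \<in> cells X n \<Longrightarrow> \<phi> m (act X n m f x) = act Y n m f (\<phi> n x)"
    "\<And>x n. x \<notin> cells X n \<Longrightarrow> \<phi> n x = undefined"
  using assms by (auto simp: cmap_def)

lemma cmapI: assumes "\<And>x n. x \<in> cells X n \<Longrightarrow> \<phi> n x \<in> cells Y n"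
    "\<And>n m f x. Bmor n m f \<Longrightarrow> x \<in> cells X n \<Longrightarrow> \<phi> m (act X n m f x) = act Y n m f (\<phi> n x)"
    "\<And>x n. x \<notin> cells X n \<Longrightarrow> \<phi> n x = undefined"
  shows "cmap X Y \<phi>"
  using assms by (auto simp: cmap_def)

lemma pmap_eq: "\<phi> \<in> cells (expo II A) c \<Longrightarrow> pmap A c \<phi> = (\<phi> c (idB c, ep False), \<phi> c (idB c, ep True))"
  by (simp add: pmap_def del: expo_cells)

lemma dir1 :
  assumes PL: "path_lifting (expo II A) (prod_cs A A) (pmap A)"
  shows "box_filling 2 A"
  unfolding box_filling_def
proof (intro allI impI)
  fix e \<phi> assume \<phi>: "cmap (obox 2 e) A \<phi>"
  define d where "d = (\<not> e)"
  have ob1: "pair (ep d) h \<in> cells (obox 2 e) m" if "Bmor 1 m h" for h m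
    using pair_Bmor[OF Bmor_ep(1) that] by (simp add: obox_cells d_def)
  have ob2: "pair h (ep b) \<in> cells (obox 2 e) m" if "Bmor 1 m h" for h m b
    using pair_Bmor[OF that Bmor_ep(1)] by (cases b) (simp_all add: obox_cells)
  have \<phi>c: "\<phi> n g \<in> cells A n" if "g \<in> cells (obox 2 e) n" for g n using cmapD(1)[OF \<phi> that] .
  have \<phi>n: "\<phi> m (f \<circ> g) = act A n m f (\<phi> n g)" if "Bmor n m f" "g \<in> cells (obox 2 e) n" for n m f g
    using cmapD(2)[OF \<phi> that] by simp
  define u where "u = (\<lambda>k (f::bpt\<Rightarrow>bpt). if f \<in> cells (repr 0) k then
     (\<lambda>m gh. if gh \<in> cells (prod_cs (repr k) II) m then \<phi> m (pair (ep d) (snd gh)) else undefined)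
     else undefined)"
  define v where "v = (\<lambda>k h. if h \<in> cells II k then (\<phi> k (pair h (ep False)), \<phi> k (pair h (ep True))) else undefined)"
  have uexp: "cmap (prod_cs (repr n) II) A (u n x)" if x: "Bmor 0 n x" for n x
  proof (rule cmapI)
    fix gh k assume "gh \<in> cells (prod_cs (repr n) II) k"
    then obtain g h where gh: "gh = (g, h)" "Bmor n k g" "Bmor 1 k h" by (cases gh) auto
    show "u n x k gh \<in> cells A k" using x gh \<phi>c[OF ob1[OF gh(3)]] by (auto simp: u_def)
  next
    fix k k' f gh assume f: "Bmor k k' f" and "gh \<in> cells (prod_cs (repr n) II) k"
    then obtain g h where gh: "gh = (g, h)" "Bmor n k g" "Bmor 1 k h" by (cases gh) auto
    have "f \<circ> pair (ep d) h = pair (ep d) (f \<circ> h)"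
      using f by (simp add: comp_pair comp_ep BmorD)
    thus "u n x k' (act (prod_cs (repr n) II) k k' f gh) = act A k k' f (u n x k gh)"
      using x gh f \<phi>n[OF f ob1[OF gh(3)]]
      by (auto simp: u_def intro: Bmor_comp)
  next
    fix gh k assume "gh \<notin> cells (prod_cs (repr n) II) k"
    thus "u n x k gh = undefined" using x by (auto simp: u_def)
  qed
  have u: "cmap (repr 0) (expo II A) u"
  proof (rule cmapI)
    fix x n assume "x \<in> cells (repr 0) n" thus "u n x \<in> cells (expo II A) n" using uexp by simp
  next
    fix n m f x assume f: "Bmor n m f" and x: "x \<in> cells (repr 0) n"
    show "u m (act (repr 0) n m f x) = act (expo II A) n m f (u n x)"
    proof (rule ext, rule ext)
      fix k gh
      show "u m (act (repr 0) n m f x) k gh = act (expo II A) n m f (u n x) k gh"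
        using f x by (cases gh) (auto simp: u_def expo_act intro: Bmor_comp)
    qed
  next
    fix x n assume "x \<notin> cells (repr 0) n" thus "u n x = undefined" by (simp add: u_def)
  qed
  have v: "cmap II (prod_cs A A) v"
  proof (rule cmapI)
    fix h n assume h: "h \<in> cells II n"
    hence h1: "Bmor 1 n h" by simp
    show "v n h \<in> cells (prod_cs A A) n"
      using h \<phi>c[OF ob2[OF h1]] by (simp add: v_def)
  next
    fix n m f h assume f: "Bmor n m f" and h: "h \<in> cells II n"
    have h1: "Bmor 1 n h" using h by simp
    have eq: "f \<circ> pair h (ep b) = pair (f \<circ> h) (ep b)" for b
      using f by (simp add: comp_pair comp_ep BmorD)
    have e2: "\<phi> m (pair (f \<circ> h) (ep b)) = act A n m f (\<phi> n (pair h (ep b)))" for b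
      using \<phi>n[OF f ob2[OF h1]] eq by simp
    have "Bmor 1 m (f \<circ> h)" using Bmor_comp[OF h1 f] .
    thus "v m (act II n m f h) = act (prod_cs A A) n m f (v n h)"
      using h1 e2 by (simp add: v_def)
  next
    fix h n assume "h \<notin> cells II n" thus "v n h = undefined" by (simp add: v_def)
  qed
  have cond: "meq (repr 0) (cmp (pmap A) u) (cmp v (endpt d))"
    unfolding meq_def
  proof (intro allI ballI)
    fix n x assume x: "x \<in> cells (repr 0) n"
    hence x0: "Bmor 0 n x" by simp
    have ue: "u n x \<in> cells (expo II A) n" using uexp[OF x0] by simp
    have "endpt d n x = ep d" using x0 by (simp add: endpt_def comp_ep BmorD)
    moreover have "pmap A n (u n x) = (u n x n (idB n, ep False), u n x n (idB n, ep True))"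
      by (rule pmap_eq[OF ue])
    ultimately show "cmp (pmap A) u n x = cmp v (endpt d) n x"
      using x0 by (simp add: cmp_def u_def v_def)
  qed
  obtain w where w: "cmap II (expo II A) w" and w1: "meq (repr 0) (cmp w (endpt d)) u"
    and w2: "meq II (cmp (pmap A) w) v"
    using PL u v cond unfolding path_lifting_def by blast
  have wc: "cmap (prod_cs (repr m) II) A (w m h)" if "Bmor 1 m h" for m h
    using cmapD(1)[OF w, of h m] that by simp
  have wn: "w m (f \<circ> h) = act (expo II A) n m f (w n h)" if "Bmor 1 n h" "Bmor n m f" for n m f h
    using cmapD(2)[OF w that(2), of h] that(1) by simp
  define \<psi> where "\<psi> = (\<lambda>m g. if Bmor 2 m g then w m (g \<circ> pr1) m (idB m, g \<circ> pr2) else undefined)"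
  have g1: "Bmor 1 m (g \<circ> pr1)" if "Bmor 2 m g" for m g using Bmor_comp[OF Bmor_pr1 that] .
  have g2: "Bmor 1 m (g \<circ> pr2)" if "Bmor 2 m g" for m g using Bmor_comp[OF Bmor_pr2 that] .
  have \<psi>: "cmap (repr 2) A \<psi>"
  proof (rule cmapI)
    fix g m assume "g \<in> cells (repr 2) m"
    hence g: "Bmor 2 m g" by simp
    show "\<psi> m g \<in> cells A m"
      using cmapD(1)[OF wc[OF g1[OF g]], of "(idB m, g \<circ> pr2)" m] g g2[OF g] by (simp add: \<psi>_def)
  next
    fix n m f g assume f: "Bmor n m f" and "g \<in> cells (repr 2) n"
    hence g: "Bmor 2 n g" by simp
    have fg: "Bmor 2 m (f \<circ> g)" using Bmor_comp[OF g f] .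
    have "\<psi> m (f \<circ> g) = w m (f \<circ> (g \<circ> pr1)) m (idB m, f \<circ> (g \<circ> pr2))"
      using fg by (simp add: \<psi>_def o_assoc)
    also have "\<dots> = w n (g \<circ> pr1) m (f, f \<circ> (g \<circ> pr2))"
      using wn[OF g1[OF g] f] f g2[OF g] Bmor_comp[OF g2[OF g] f] by (simp add: expo_act idB_left)
    also have "\<dots> = w n (g \<circ> pr1) m (act (prod_cs (repr n) II) n m f (idB n, g \<circ> pr2))"
      using f by (simp add: idB_right)
    also have "\<dots> = act A n m f (w n (g \<circ> pr1) n (idB n, g \<circ> pr2))"
      using cmapD(2)[OF wc[OF g1[OF g]] f, of "(idB n, g \<circ> pr2)"] g2[OF g] by simp
    finally show "\<psi> m (act (repr 2) n m f g) = act A n m f (\<psi> n g)"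
      using g by (simp add: \<psi>_def)
  next
    fix g m assume "g \<notin> cells (repr 2) m" thus "\<psi> m g = undefined" by (simp add: \<psi>_def)
  qed
  have "meq (obox 2 e) \<psi> \<phi>"
    unfolding meq_def
  proof (intro allI ballI)
    fix m g assume gb: "g \<in> cells (obox 2 e) m"
    hence g: "Bmor 2 m g" and cs: "g (Var 1) = val d \<or> g (Var 2) = val False \<or> g (Var 2) = val True"
      by (auto simp: obox_cells d_def)
    have eta: "pair (g \<circ> pr1) (g \<circ> pr2) = g" using pair_eta[OF g] .
    show "\<psi> m g = \<phi> m g"
    proof (cases "g (Var 1) = val d")
      case True
      hence p1: "g \<circ> pr1 = ep d" using True Bmor1_val[OF g1[OF g]] by simp
      have c0: "Bmor 0 m c0" by (simp add: Bmor_0)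
      have "w m (endpt d m c0) = u m c0" using w1 c0 unfolding meq_def cmp_def by simp
      moreover have "endpt d m c0 = ep d" using c0 by (simp add: endpt_def c0_def comp_ep)
      ultimately have "w m (ep d) = u m c0" by simp
      hence "\<psi> m g = u m c0 m (idB m, g \<circ> pr2)" using g p1 by (simp add: \<psi>_def)
      also have "\<dots> = \<phi> m (pair (ep d) (g \<circ> pr2))" using c0 g2[OF g] by (simp add: u_def)
      also have "\<dots> = \<phi> m g" using eta p1 by simp
      finally show ?thesis .
    next
      case False
      with cs obtain b where b: "g (Var 2) = val b" by blast
      have p2: "g \<circ> pr2 = ep b"
        by (rule Bmor1_val[OF g2[OF g]]) (simp add: b)
      have we: "w m (g \<circ> pr1) \<in> cells (expo II A) m" using wc[OF g1[OF g]] by simp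
      have "pmap A m (w m (g \<circ> pr1)) = v m (g \<circ> pr1)"
        using w2 g1[OF g] unfolding meq_def cmp_def by simp
      hence "(w m (g \<circ> pr1) m (idB m, ep False), w m (g \<circ> pr1) m (idB m, ep True))
          = (\<phi> m (pair (g \<circ> pr1) (ep False)), \<phi> m (pair (g \<circ> pr1) (ep True)))"
        using g1[OF g] by (simp add: pmap_eq[OF we] v_def del: expo_cells)
      hence "w m (g \<circ> pr1) m (idB m, ep b) = \<phi> m (pair (g \<circ> pr1) (ep b))" by (cases b) auto
      thus ?thesis using g p2 eta by (simp add: \<psi>_def)
    qed
  qed
  with \<psi> show "\<exists>\<psi>. cmap (repr 2) A \<psi> \<and> meq (obox 2 e) \<psi> \<phi>" by blast
qed


lemma Bmor_val: "Bmor n m f \<Longrightarrow> f (val b) = val b"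
  by (cases b) (auto simp: val_def Bmor_def)

lemma val_inj[simp]: "val a = val b \<longleftrightarrow> a = b"
  by (cases a; cases b) (auto simp: val_def)

definition sel :: "bool \<Rightarrow> 'a \<times> 'a \<Rightarrow> 'a" where "sel b p = (if b then snd p else fst p)"

lemma dir2:
  assumes BF: "box_filling 2 A"
  shows "path_lifting (expo II A) (prod_cs A A) (pmap A)"
  unfolding path_lifting_def
proof (intro allI impI, elim conjE)
  fix d u v
  assume u: "cmap (repr 0) (expo II A) u" and v: "cmap II (prod_cs A A) v"
    and cond: "meq (repr 0) (cmp (pmap A) u) (cmp v (endpt d))"
  have c0: "Bmor 0 m c0" for m by (simp add: Bmor_0)
  have uc: "cmap (prod_cs (repr m) II) A (u m c0)" for m
    using cmapD(1)[OF u, of c0 m] c0 by simp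
  have un: "u m c0 k (a, b) = u k c0 k (idB k, b)" if a: "Bmor m k a" and b: "Bmor 1 k b" for m k a b
  proof -
    have "u k (a \<circ> c0) = act (expo II A) m k a (u m c0)"
      using cmapD(2)[OF u a, of c0] c0 by simp
    moreover have "a \<circ> c0 = c0" using a by (simp add: comp_c0 BmorD)
    ultimately have "u k c0 k (idB k, b) = act (expo II A) m k a (u m c0) k (idB k, b)" by simp
    also have "\<dots> = u m c0 k (a, b)" using a b by (simp add: expo_act idB_left)
    finally show ?thesis by simp
  qed
  have vc: "v k h \<in> cells (prod_cs A A) k" if "Bmor 1 k h" for k h
    using cmapD(1)[OF v, of h k] that by simp
  have vn: "v m (f \<circ> h) = act (prod_cs A A) n m f (v n h)" if "Bmor 1 n h" "Bmor n m f" for n m f h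
    using cmapD(2)[OF v that(2), of h] that(1) by simp
  have cnd: "u m c0 m (idB m, ep b) = sel b (v m (ep d))" for m b
  proof -
    have ue: "u m c0 \<in> cells (expo II A) m" using uc by simp
    have "pmap A m (u m c0) = v m (endpt d m c0)" using cond c0 unfolding meq_def cmp_def by simp
    moreover have "endpt d m c0 = ep d" using c0 by (simp add: endpt_def c0_def comp_ep)
    ultimately have "(u m c0 m (idB m, ep False), u m c0 m (idB m, ep True)) = v m (ep d)"
      using pmap_eq[OF ue] by simp
    thus ?thesis by (cases b) (auto simp: sel_def dest: sym)
  qed
  define \<phi> where "\<phi> = (\<lambda>m g. if g \<in> cells (obox 2 (\<not> d)) m then
     (if g (Var 1) = val d then u m c0 m (idB m, g \<circ> pr2)
      else if g (Var 2) = val False then fst (v m (g \<circ> pr1)) else snd (v m (g \<circ> pr1)))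
     else undefined)"
  have g1: "Bmor 1 m (g \<circ> pr1)" if "Bmor 2 m g" for m g using Bmor_comp[OF Bmor_pr1 that] .
  have g2: "Bmor 1 m (g \<circ> pr2)" if "Bmor 2 m g" for m g using Bmor_comp[OF Bmor_pr2 that] .
  have L1: "\<phi> m g = u m c0 m (idB m, g \<circ> pr2)" if g: "Bmor 2 m g" "g (Var 1) = val d" for m g
    using g by (simp add: \<phi>_def obox_cells)
  have L2: "\<phi> m g = sel b (v m (g \<circ> pr1))" if g: "Bmor 2 m g" "g (Var 2) = val b" for m g b
  proof (cases "g (Var 1) = val d")
    case True
    have "g \<circ> pr1 = ep d" using Bmor1_val[OF g1[OF g(1)]] True by simp
    moreover have "g \<circ> pr2 = ep b" using Bmor1_val[OF g2[OF g(1)]] g(2) by simp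
    ultimately show ?thesis using L1[OF g(1) True] cnd by simp
  next
    case False thus ?thesis using g by (cases b) (auto simp: \<phi>_def obox_cells sel_def)
  qed
  have ob: "g \<in> cells (obox 2 (\<not> d)) m \<longleftrightarrow> Bmor 2 m g \<and> (g (Var 1) = val d \<or> (\<exists>b. g (Var 2) = val b))" for g m
    by (auto simp: obox_cells)
  have \<phi>: "cmap (obox 2 (\<not> d)) A \<phi>"
  proof (rule cmapI)
    fix g m assume "g \<in> cells (obox 2 (\<not> d)) m"
    hence g: "Bmor 2 m g" and cs: "g (Var 1) = val d \<or> (\<exists>b. g (Var 2) = val b)" using ob by auto
    show "\<phi> m g \<in> cells A m"
    proof (cases "g (Var 1) = val d")
      case True thus ?thesis using L1[OF g True] cmapD(1)[OF uc, of "(idB m, g \<circ> pr2)" m] g2[OF g] by simp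
    next
      case False
      then obtain b where b: "g (Var 2) = val b" using cs by blast
      show ?thesis using L2[OF g b] vc[OF g1[OF g]] by (cases "v m (g \<circ> pr1)") (auto simp: sel_def)
    qed
  next
    fix n m f g assume f: "Bmor n m f" and "g \<in> cells (obox 2 (\<not> d)) n"
    hence g: "Bmor 2 n g" and cs: "g (Var 1) = val d \<or> (\<exists>b. g (Var 2) = val b)" using ob by auto
    have fg: "Bmor 2 m (f \<circ> g)" using Bmor_comp[OF g f] .
    show "\<phi> m (act (obox 2 (\<not> d)) n m f g) = act A n m f (\<phi> n g)"
    proof (cases "g (Var 1) = val d")
      case True
      have "(f \<circ> g) (Var 1) = val d" using True Bmor_val[OF f] by simp
      hence "\<phi> m (f \<circ> g) = u m c0 m (idB m, f \<circ> (g \<circ> pr2))" using L1[OF fg] by (simp add: o_assoc)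
      also have "\<dots> = u n c0 m (f, f \<circ> (g \<circ> pr2))" using un[OF f Bmor_comp[OF g2[OF g] f]] by simp
      also have "\<dots> = u n c0 m (act (prod_cs (repr n) II) n m f (idB n, g \<circ> pr2))"
        using f by (simp add: idB_right)
      also have "\<dots> = act A n m f (u n c0 n (idB n, g \<circ> pr2))"
        using cmapD(2)[OF uc f, of "(idB n, g \<circ> pr2)"] g2[OF g] by simp
      finally show ?thesis using L1[OF g True] by simp
    next
      case False
      then obtain b where b: "g (Var 2) = val b" using cs by blast
      have "(f \<circ> g) (Var 2) = val b" using b Bmor_val[OF f] by simp
      hence "\<phi> m (f \<circ> g) = sel b (v m (f \<circ> (g \<circ> pr1)))" using L2[OF fg] by (simp add: o_assoc)
      also have "\<dots> = sel b (act (prod_cs A A) n m f (v n (g \<circ> pr1)))" using vn[OF g1[OF g] f] by simp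
      also have "\<dots> = act A n m f (sel b (v n (g \<circ> pr1)))"
        by (cases "v n (g \<circ> pr1)") (simp add: sel_def)
      finally show ?thesis using L2[OF g b] by simp
    qed
  next
    fix g m assume "g \<notin> cells (obox 2 (\<not> d)) m" thus "\<phi> m g = undefined" by (simp add: \<phi>_def)
  qed
  obtain \<psi> where \<psi>: "cmap (repr 2) A \<psi>" and \<psi>\<phi>: "meq (obox 2 (\<not> d)) \<psi> \<phi>"
    using BF \<phi> unfolding box_filling_def by blast
  have \<psi>c: "\<psi> m g \<in> cells A m" if "Bmor 2 m g" for m g using cmapD(1)[OF \<psi>, of g m] that by simp
  have \<psi>n: "\<psi> m (f \<circ> g) = act A n m f (\<psi> n g)" if "Bmor n m f" "Bmor 2 n g" for n m f g
    using cmapD(2)[OF \<psi> that(1), of g] that(2) by simp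
  have \<psi>e: "\<psi> m g = \<phi> m g" if "g \<in> cells (obox 2 (\<not> d)) m" for m g
    using \<psi>\<phi> that unfolding meq_def by blast
  define w where "w = (\<lambda>k h. if Bmor 1 k h then (\<lambda>m ab. if ab \<in> cells (prod_cs (repr k) II) m
      then \<psi> m (pair (fst ab \<circ> h) (snd ab)) else undefined) else undefined)"
  have wc: "cmap (prod_cs (repr k) II) A (w k h)" if h: "Bmor 1 k h" for k h
  proof (rule cmapI)
    fix ab m assume "ab \<in> cells (prod_cs (repr k) II) m"
    then obtain a b where ab: "ab = (a, b)" "Bmor k m a" "Bmor 1 m b" by (cases ab) auto
    show "w k h m ab \<in> cells A m"
      using \<psi>c[OF pair_Bmor[OF Bmor_comp[OF h ab(2)] ab(3)]] ab h by (simp add: w_def)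
  next
    fix m m' f ab assume f: "Bmor m m' f" and "ab \<in> cells (prod_cs (repr k) II) m"
    then obtain a b where ab: "ab = (a, b)" "Bmor k m a" "Bmor 1 m b" by (cases ab) auto
    have "f \<circ> pair (a \<circ> h) b = pair (f \<circ> a \<circ> h) (f \<circ> b)"
      using f by (simp add: comp_pair BmorD o_assoc)
    thus "w k h m' (act (prod_cs (repr k) II) m m' f ab) = act A m m' f (w k h m ab)"
      using \<psi>n[OF f pair_Bmor[OF Bmor_comp[OF h ab(2)] ab(3)]] ab h f
        Bmor_comp[OF ab(2) f] Bmor_comp[OF ab(3) f] by (simp add: w_def)
  next
    fix ab m assume "ab \<notin> cells (prod_cs (repr k) II) m" thus "w k h m ab = undefined"
      using h by (simp add: w_def)
  qed
  have w: "cmap II (expo II A) w"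
  proof (rule cmapI)
    fix h k assume "h \<in> cells II k" thus "w k h \<in> cells (expo II A) k" using wc by simp
  next
    fix k k' f h assume f: "Bmor k k' f" and "h \<in> cells II k"
    hence h: "Bmor 1 k h" by simp
    have fh: "Bmor 1 k' (f \<circ> h)" using Bmor_comp[OF h f] .
    show "w k' (act II k k' f h) = act (expo II A) k k' f (w k h)"
    proof (rule ext, rule ext)
      fix m ab
      show "w k' (act II k k' f h) m ab = act (expo II A) k k' f (w k h) m ab"
      proof (cases ab)
        case (Pair a b)
        show ?thesis
        proof (cases "Bmor k' m a \<and> Bmor 1 m b")
          case True
          thus ?thesis using Pair h fh Bmor_comp[OF f, of m a]
            by (simp add: w_def expo_act o_assoc)
        next
          case False thus ?thesis using Pair h fh by (auto simp: w_def expo_act)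
        qed
      qed
    qed
  next
    fix h k assume "h \<notin> cells II k" thus "w k h = undefined" by (simp add: w_def)
  qed
  have w1: "meq (repr 0) (cmp w (endpt d)) u"
    unfolding meq_def cmp_def
  proof (intro allI ballI)
    fix n x assume "x \<in> cells (repr 0) n"
    hence x: "x = c0" by (simp add: Bmor_0)
    have e: "endpt d n c0 = ep d" using c0 by (simp add: endpt_def c0_def comp_ep)
    show "w n (endpt d n x) = u n x"
    proof (rule ext, rule ext)
      fix m ab
      show "w n (endpt d n x) m ab = u n x m ab"
      proof (cases ab)
        case (Pair a b)
        show ?thesis
        proof (cases "Bmor n m a \<and> Bmor 1 m b")
          case True
          hence a: "Bmor n m a" and b: "Bmor 1 m b" by auto
          have pb: "Bmor 2 m (pair (ep d) b)" using pair_Bmor[OF Bmor_ep(1) b] .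
          have "a \<circ> ep d = ep d" using a by (simp add: comp_ep BmorD)
          hence "w n (ep d) m ab = \<psi> m (pair (ep d) b)" using Pair a b by (simp add: w_def)
          also have "\<dots> = \<phi> m (pair (ep d) b)" using pb by (intro \<psi>e) (simp add: obox_cells)
          also have "\<dots> = u m c0 m (idB m, b)" using L1[OF pb] pair_pr2[OF Bmor_ep(1) b] by simp
          also have "\<dots> = u n c0 m (a, b)" using un[OF a b] by simp
          finally show ?thesis using x e Pair by simp
        next
          case False thus ?thesis using Pair x e cmapD(3)[OF uc[of n], of ab m] by (auto simp: w_def)
        qed
      qed
    qed
  qed
  have w2: "meq II (cmp (pmap A) w) v"
    unfolding meq_def cmp_def
  proof (intro allI ballI)
    fix n h assume "h \<in> cells II n"
    hence h: "Bmor 1 n h" by simp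
    have we: "w n h \<in> cells (expo II A) n" using wc[OF h] by simp
    have "w n h n (idB n, ep b) = sel b (v n h)" for b
    proof -
      have pb: "Bmor 2 n (pair h (ep b))" using pair_Bmor[OF h Bmor_ep(1)] .
      have "w n h n (idB n, ep b) = \<psi> n (pair h (ep b))" using h by (simp add: w_def idB_left)
      also have "\<dots> = \<phi> n (pair h (ep b))" using pb by (intro \<psi>e) (cases b; simp add: obox_cells)
      also have "\<dots> = sel b (v n h)" using L2[OF pb, of b] pair_pr1[OF h Bmor_ep(1)] by simp
      finally show ?thesis .
    qed
    thus "pmap A n (w n h) = v n h" using pmap_eq[OF we] by (simp add: sel_def)
  qed
  show "\<exists>w. cmap II (expo II A) w \<and> meq (repr 0) (cmp w (endpt d)) u \<and> meq II (cmp (pmap A) w) v"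
    using w w1 w2 by blast
qed


theorem proposition2p8:
  fixes A :: "'a cset"
  assumes "cubical_set A"
  shows "path_lifting (expo II A) (prod_cs A A) (pmap A) \<longleftrightarrow> box_filling 2 A"
  using dir1 dir2 by blast

end
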